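(* Let $\mathcal{Y}_n$ be a finite periodic box in $\tilde\varepsilon_n\mathbb{Z}\times\varepsilon_n\mathbb{Z}^3$ and $\mathcal{Y}_0\subset\mathcal{Y}_n$ a finite periodic box in $\mathbb{Z}\times\mathbb{Z}^3$. On $\mathbb{C}^{\mathcal{Y}_0}$ and $\mathbb{C}^{\mathcal{Y}_n}$ use the real bilinear forms $\langle f,g\rangle_0=\sum_{x\in\mathcal{Y}_0}f(x)g(x)$ and $\langle f,g\rangle_n=\tilde\varepsilon_n\varepsilon_n^3\sum_{u\in\mathcal{Y}_n}f(u)g(u)$; for pairs, $\langle [a;b],[c;d]\rangle=\langle a,c\rangle+\langle b,d\rangle$, and adjoints ${}^*$ are transposes with respect to these forms. Let $Q_n:\mathbb{C}^{\mathcal{Y}_n}\to\mathbb{C}^{\mathcal{Y}_0}$ be the map with $(Q_nf)(x)$ the average of $f$ over the box in $\mathcal{Y}_n$ of side $1$ centered at $x\in\mathcal{Y}_0$ (acting componentwise on pairs). Let $\Delta$ be the discrete Laplacian on $\mathcal{Y}_n$ and let $\partial_0$ be a time-derivative operator on $\mathbb{C}^{\mathcal{Y}_n}$ which is treated as a continuum derivative, i.e. $\partial_0^*=-\partial_0$. Let $d_n>0$, $\mu_n>0$, $v_n>0$, $r_n=\sqrt{\mu_n/v_n}$, and $$A_n(\psi_*,\psi,\phi_*,\phi)=\langle \psi_*-Q_n\phi_*,\psi-Q_n\phi\rangle_0+\langle\phi_*,(-d_n\partial_0-\Delta)\phi\rangle_n-\mu_n\langle\phi_*,\phi\rangle_n+\tfrac{v_n}{2}\langle\phi_*\phi,\phi_*\phi\rangle_n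 .$$ Define $$\square=\begin{bmatrix}2\mu_n-\Delta & i\,d_n\partial_0^*\\ i\,d_n\partial_0 & -\Delta\end{bmatrix}+Q_n^*Q_n .$$ For fields $R,\Theta\in\mathbb{C}^{\mathcal{Y}_0}$ set $\psi=r_ne^{R+i\Theta}$, $\psi_*=r_ne^{R-i\Theta}$, and let $X,H\in\mathbb{C}^{\mathcal{Y}_n}$ be given by $\begin{bmatrix}X\\H\end{bmatrix}=\square^{-1}Q_n^*\begin{bmatrix}R\\ \Theta\end{bmatrix}$, with $\phi=r_ne^{X+iH}$, $\phi_*=r_ne^{X-iH}$. Then $$\frac{1}{r_n^2}A_n(\psi_*,\psi,\phi_*,\phi)=\Big\langle\begin{bmatrix}R\\ \Theta\end{bmatrix},\big\{\mathbb{1}-Q_n\square^{-1}Q_n^*\big\}\begin{bmatrix}R\\ \Theta\end{bmatrix}\Big\rangle_0-\frac{r_n^2v_n}{2}\langle 1,1\rangle_n+O[3],$$ where $O[3]=O(X^3+R^3+H^3+\Theta^3)$ denotes terms of total degree at least three in the fields $R,\Theta,X,H$.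
   Context: This is a model computation of the quadratic approximation of a simplified effective action near the bottom of the "Mexican hat" potential well, whose minima lie on the circle $|\phi|=r_n=\sqrt{\mu_n/v_n}$. The fields $R,X$ are "radial" and $\Theta,H$ "tangential" fluctuations; the defining relation for $(X,H)$ is the linearization (in $R,\Theta,X,H$) of the background field equations $Q_n^*(Q_n\phi-\psi)+D_n\phi+(v_n\phi_*\phi-\mu_n)\phi=0$, $Q_n^*(Q_n\phi_*-\psi_* )+D_n^*\phi_*+(v_n\phi_*\phi-\mu_n)\phi_*=0$ with $D_n=-d_n\partial_0-\Delta$. The convention $\partial_0^*=-\partial_0$ (pretending the forward difference $\partial_0$ is a continuum derivative) is a standing assumption of this computation. Products of fields such as $\phi_*\phi$ are pointwise. *)

theory Defs
  imports Complex_Main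
begin

text \<open>Lattice points are integer quadruples (time index, three space indices).
  The fine lattice Y_n has spacing 1/T in time and 1/N in space (so that
  Y_0 \<subseteq> Y_n); it is the periodic box with M0*T time sites and M*N sites in
  each space direction, i.e. physical periods M0 (time) and M (space).\<close>

type_synonym pt = "int \<times> int \<times> int \<times> int"
type_synonym field = "pt \<Rightarrow> complex"

definition Y0 :: "nat \<Rightarrow> nat \<Rightarrow> pt set" where
  "Y0 M0 M = {0..<int M0} \<times> {0..<int M} \<times> {0..<int M} \<times> {0..<int M}"

definition Yn :: "nat \<Rightarrow> nat \<Rightarrow> nat \<Rightarrow> nat \<Rightarrow> pt set" where
  "Yn T N M0 M = {0..<int (M0*T)} \<times> {0..<int (M*N)} \<times> {0..<int (M*N)} \<times> {0..<int (M*N)}"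

definition wrapn :: "nat \<Rightarrow> nat \<Rightarrow> nat \<Rightarrow> nat \<Rightarrow> pt \<Rightarrow> pt" where
  "wrapn T N M0 M u = (case u of (a, b, c, e) \<Rightarrow>
     (a mod int (M0*T), b mod int (M*N), c mod int (M*N), e mod int (M*N)))"

definition emb :: "nat \<Rightarrow> nat \<Rightarrow> pt \<Rightarrow> pt" where
  "emb T N x = (case x of (a, b, c, e) \<Rightarrow> (a * int T, b * int N, c * int N, e * int N))"

definition padd :: "pt \<Rightarrow> pt \<Rightarrow> pt" where
  "padd u w = (case u of (a, b, c, e) \<Rightarrow> case w of (a', b', c', e') \<Rightarrow>
     (a + a', b + b', c + c', e + e'))"

text \<open>Offsets (in fine-lattice index units) of the points of the box of side 1
  centred at a point: |offset| < 1/2 in physical units in every coordinate.\<close>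
definition blk :: "nat \<Rightarrow> nat \<Rightarrow> pt set" where
  "blk T N = {j0. 2 * \<bar>j0\<bar> < int T} \<times> {j. 2 * \<bar>j\<bar> < int N}
             \<times> {j. 2 * \<bar>j\<bar> < int N} \<times> {j. 2 * \<bar>j\<bar> < int N}"

definition ip0 :: "nat \<Rightarrow> nat \<Rightarrow> field \<Rightarrow> field \<Rightarrow> complex" where
  "ip0 M0 M f g = (\<Sum>x\<in>Y0 M0 M. f x * g x)"

definition ipn :: "nat \<Rightarrow> nat \<Rightarrow> nat \<Rightarrow> nat \<Rightarrow> field \<Rightarrow> field \<Rightarrow> complex" where
  "ipn T N M0 M f g = (1 / of_nat T) * (1 / of_nat N) ^ 3 * (\<Sum>u\<in>Yn T N M0 M. f u * g u)"

definition ip0p :: "nat \<Rightarrow> nat \<Rightarrow> field \<times> field \<Rightarrow> field \<times> field \<Rightarrow> complex" where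
  "ip0p M0 M p q = ip0 M0 M (fst p) (fst q) + ip0 M0 M (snd p) (snd q)"

definition ipnp :: "nat \<Rightarrow> nat \<Rightarrow> nat \<Rightarrow> nat \<Rightarrow> field \<times> field \<Rightarrow> field \<times> field \<Rightarrow> complex" where
  "ipnp T N M0 M p q = ipn T N M0 M (fst p) (fst q) + ipn T N M0 M (snd p) (snd q)"

definition Qn :: "nat \<Rightarrow> nat \<Rightarrow> nat \<Rightarrow> nat \<Rightarrow> field \<Rightarrow> field" where
  "Qn T N M0 M f x = (1 / of_nat (card (blk T N))) *
      (\<Sum>j\<in>blk T N. f (wrapn T N M0 M (padd (emb T N x) j)))"

text \<open>Its adjoint (transpose) Q_n^* : C^{Y_0} \<rightarrow> C^{Y_n} with respect to the forms
  ip0 and ipn, i.e. ip0 (Qn f) g = ipn f (Qn_adj g).\<close>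
definition Qn_adj :: "nat \<Rightarrow> nat \<Rightarrow> nat \<Rightarrow> nat \<Rightarrow> field \<Rightarrow> field" where
  "Qn_adj T N M0 M g u = (of_nat T * of_nat N ^ 3 / of_nat (card (blk T N))) *
      (\<Sum>x\<in>Y0 M0 M. of_nat (card {j\<in>blk T N. wrapn T N M0 M (padd (emb T N x) j) = u}) * g x)"

definition Qnp :: "nat \<Rightarrow> nat \<Rightarrow> nat \<Rightarrow> nat \<Rightarrow> field \<times> field \<Rightarrow> field \<times> field" where
  "Qnp T N M0 M p = (Qn T N M0 M (fst p), Qn T N M0 M (snd p))"

definition Qn_adjp :: "nat \<Rightarrow> nat \<Rightarrow> nat \<Rightarrow> nat \<Rightarrow> field \<times> field \<Rightarrow> field \<times> field" where
  "Qn_adjp T N M0 M p = (Qn_adj T N M0 M (fst p), Qn_adj T N M0 M (snd p))"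

definition lap :: "nat \<Rightarrow> nat \<Rightarrow> nat \<Rightarrow> nat \<Rightarrow> field \<Rightarrow> field" where
  "lap T N M0 M f u = of_nat N ^ 2 *
     ((f (wrapn T N M0 M (padd u (0,1,0,0))) + f (wrapn T N M0 M (padd u (0,-1,0,0))) - 2 * f (wrapn T N M0 M u))
    + (f (wrapn T N M0 M (padd u (0,0,1,0))) + f (wrapn T N M0 M (padd u (0,0,-1,0))) - 2 * f (wrapn T N M0 M u))
    + (f (wrapn T N M0 M (padd u (0,0,0,1))) + f (wrapn T N M0 M (padd u (0,0,0,-1))) - 2 * f (wrapn T N M0 M u)))"

text \<open>A general linear operator on C^{Y_n}, given by its kernel K (matrix entries),
  and its adjoint (transpose) with respect to ipn (the weight is constant, so the
  transpose w.r.t. ipn is the transposed kernel).  The time derivative \<partial>_0 is such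
  an operator.\<close>
definition kop :: "nat \<Rightarrow> nat \<Rightarrow> nat \<Rightarrow> nat \<Rightarrow> (pt \<Rightarrow> pt \<Rightarrow> complex) \<Rightarrow> field \<Rightarrow> field" where
  "kop T N M0 M K f u = (\<Sum>u'\<in>Yn T N M0 M. K u u' * f u')"

definition kop_adj :: "nat \<Rightarrow> nat \<Rightarrow> nat \<Rightarrow> nat \<Rightarrow> (pt \<Rightarrow> pt \<Rightarrow> complex) \<Rightarrow> field \<Rightarrow> field" where
  "kop_adj T N M0 M K f u = (\<Sum>u'\<in>Yn T N M0 M. K u' u * f u')"

definition sq :: "nat \<Rightarrow> nat \<Rightarrow> nat \<Rightarrow> nat \<Rightarrow> (pt \<Rightarrow> pt \<Rightarrow> complex) \<Rightarrow> real \<Rightarrow> real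
                  \<Rightarrow> field \<times> field \<Rightarrow> field \<times> field" where
  "sq T N M0 M K d \<mu> p =
    ((\<lambda>u. 2 * of_real \<mu> * fst p u - lap T N M0 M (fst p) u
          + \<i> * of_real d * kop_adj T N M0 M K (snd p) u
          + Qn_adj T N M0 M (Qn T N M0 M (fst p)) u),
     (\<lambda>u. \<i> * of_real d * kop T N M0 M K (fst p) u - lap T N M0 M (snd p) u
          + Qn_adj T N M0 M (Qn T N M0 M (snd p)) u))"

text \<open>Elements of C^{Y_n} x C^{Y_n} are represented by pairs of functions vanishing off Y_n.\<close>
definition suppn :: "nat \<Rightarrow> nat \<Rightarrow> nat \<Rightarrow> nat \<Rightarrow> field \<times> field \<Rightarrow> bool" where
  "suppn T N M0 M p \<longleftrightarrow> (\<forall>u. u \<notin> Yn T N M0 M \<longrightarrow> fst p u = 0 \<and> snd p u = 0)"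

definition eq_on_n :: "nat \<Rightarrow> nat \<Rightarrow> nat \<Rightarrow> nat \<Rightarrow> field \<times> field \<Rightarrow> field \<times> field \<Rightarrow> bool" where
  "eq_on_n T N M0 M p q \<longleftrightarrow> (\<forall>u\<in>Yn T N M0 M. fst p u = fst q u \<and> snd p u = snd q u)"

definition sq_invertible :: "nat \<Rightarrow> nat \<Rightarrow> nat \<Rightarrow> nat \<Rightarrow> (pt \<Rightarrow> pt \<Rightarrow> complex) \<Rightarrow> real \<Rightarrow> real \<Rightarrow> bool" where
  "sq_invertible T N M0 M K d \<mu> \<longleftrightarrow>
     (\<forall>g. \<exists>!p. suppn T N M0 M p \<and> eq_on_n T N M0 M (sq T N M0 M K d \<mu> p) g)"

definition sq_inv :: "nat \<Rightarrow> nat \<Rightarrow> nat \<Rightarrow> nat \<Rightarrow> (pt \<Rightarrow> pt \<Rightarrow> complex) \<Rightarrow> real \<Rightarrow> real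
                  \<Rightarrow> field \<times> field \<Rightarrow> field \<times> field" where
  "sq_inv T N M0 M K d \<mu> g = (THE p. suppn T N M0 M p \<and> eq_on_n T N M0 M (sq T N M0 M K d \<mu> p) g)"

definition An :: "nat \<Rightarrow> nat \<Rightarrow> nat \<Rightarrow> nat \<Rightarrow> (pt \<Rightarrow> pt \<Rightarrow> complex) \<Rightarrow> real \<Rightarrow> real \<Rightarrow> real
                  \<Rightarrow> field \<Rightarrow> field \<Rightarrow> field \<Rightarrow> field \<Rightarrow> complex" where
  "An T N M0 M K d \<mu> v \<psi>s \<psi> \<phi>s \<phi> =
     ip0 M0 M (\<lambda>x. \<psi>s x - Qn T N M0 M \<phi>s x) (\<lambda>x. \<psi> x - Qn T N M0 M \<phi> x)
   + ipn T N M0 M \<phi>s (\<lambda>u. - of_real d * kop T N M0 M K \<phi> u - lap T N M0 M \<phi> u)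
   - of_real \<mu> * ipn T N M0 M \<phi>s \<phi>
   + of_real v / 2 * ipn T N M0 M (\<lambda>u. \<phi>s u * \<phi> u) (\<lambda>u. \<phi>s u * \<phi> u)"

definition nrm0 :: "nat \<Rightarrow> nat \<Rightarrow> field \<Rightarrow> real" where
  "nrm0 M0 M f = Max ((\<lambda>x. cmod (f x)) ` Y0 M0 M)"

definition nrmn :: "nat \<Rightarrow> nat \<Rightarrow> nat \<Rightarrow> nat \<Rightarrow> field \<Rightarrow> real" where
  "nrmn T N M0 M f = Max ((\<lambda>u. cmod (f u)) ` Yn T N M0 M)"

end

theory Submission
  imports Defs
begin
lemma exp_rem3:
  fixes z :: complex
  assumes "norm z \<le> 1/2"
  shows "norm (exp z - 1 - z - z^2/2) \<le> norm z ^ 3"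
proof (cases "z = 0")
  case True then show ?thesis by simp
next
  case False
  have sums: "(\<lambda>k. z ^ (k + 3) /\<^sub>R fact (k + 3)) sums (exp z - (\<Sum>k<3. z ^ k /\<^sub>R fact k))"
    by (intro sums_split_initial_segment exp_converges)
  have "summable (\<lambda>k. norm z ^ (k + 3) /\<^sub>R fact (k + 3))"
    using summable_norm_exp[of z]
    by (intro summable_norm summable_ignore_initial_segment)
       (auto simp: norm_power norm_divide divide_simps)
  also have "?this \<longleftrightarrow> summable (\<lambda>k. norm z ^ 3 * (norm z ^ k / fact (k +3)))"
    by (simp add: power_add mult_ac divide_simps del: of_nat_Suc of_nat_add)
  also have "\<dots> \<longleftrightarrow> summable (\<lambda>k. norm z ^ k / fact (k + 3))"
    by (subst summable_cmult_iff) (use \<open>z \<noteq> 0\<close> in auto)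
  finally have summable: "summable (\<lambda>k. norm z ^ k / fact (k + 3))" .
  have "exp z - 1 - z - z^2/2 = (\<Sum>k. z ^ (k + 3) / fact (k + 3))"
    using sums by (simp add: sums_iff scaleR_conv_of_real divide_simps eval_nat_numeral)
  also have "norm \<dots> \<le> (\<Sum>k. norm (z ^ (k + 3) / fact (k + 3)))"
    using summable_norm_exp[of z]
    by (intro summable_norm summable_ignore_initial_segment)
       (auto simp: norm_power norm_divide divide_simps)
  also have "\<dots> = (\<Sum>k. norm z ^ 3 * (norm z ^ k / fact (k + 3)))"
    by (simp add: power_add norm_power norm_divide mult_ac norm_mult del: of_nat_Suc)
  also have "\<dots> = norm z ^ 3 * (\<Sum>k. norm z ^ k / fact (k + 3))"
    using summable by (rule suminf_mult)
  also have "\<dots> \<le> norm z ^ 3 * (1 / (1 - norm z) / 2)"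
  proof (intro mult_left_mono, rule sums_le)
    show "(\<lambda>k. norm z ^ k / fact (k + 3)) sums (\<Sum>k. norm z ^ k / fact (k + 3))"
      using summable by blast
    show "(\<lambda>k. norm z ^ k / 2) sums (1 / (1 - norm z) / 2)"
      using assms by (intro geometric_sums sums_divide) auto
  next
    fix k :: nat
    have "norm z ^ k / fact (k + 3) \<le> norm z ^ k / fact 2"
      by (intro divide_left_mono fact_mono) auto
    thus "norm z ^ k / fact (k + 3) \<le> norm z ^ k / 2"
      by simp
  qed (auto simp: divide_simps)
  also have "\<dots> \<le> norm z ^ 3"
  proof -
    have "1 / (1 - norm z) / 2 \<le> 1" using assms by (simp add: field_simps)
    then have "norm z ^ 3 * (1 / (1 - norm z) / 2) \<le> norm z ^ 3 * 1"
      by (intro mult_left_mono) auto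
    then show ?thesis by simp
  qed
  finally show ?thesis .
qed

lemma exp_rem2:
  fixes z :: complex
  assumes "norm z \<le> 1/2"
  shows "norm (exp z - 1 - z) \<le> norm z ^ 2"
proof -
  have "norm (exp z - 1 - z) \<le> norm (exp z - 1 - z - z^2/2) + norm (z^2/2)"
    using norm_triangle_ineq[of "exp z - 1 - z - z^2/2" "z^2/2"] by simp
  also have "\<dots> \<le> norm z ^ 3 + norm z ^ 2 / 2"
    using exp_rem3[OF assms] by (simp add: norm_power)
  also have "\<dots> \<le> norm z ^ 2"
  proof -
    have "norm z ^ 3 \<le> norm z ^ 2 * (1/2)"
    proof -
      have "norm z ^ 2 * norm z \<le> norm z ^ 2 * (1/2)"
        using assms by (intro mult_left_mono) auto
      then show ?thesis by (simp add: power3_eq_cube power2_eq_square)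
    qed
    then show ?thesis by simp
  qed
  finally show ?thesis .
qed

lemma exp_rem1:
  fixes z :: complex
  assumes "norm z \<le> 1/2"
  shows "norm (exp z - 1) \<le> 2 * norm z"
proof -
  have "norm (exp z - 1) \<le> norm (exp z - 1 - z) + norm z"
    using norm_triangle_ineq[of "exp z - 1 - z" "z"] by simp
  also have "\<dots> \<le> norm z ^ 2 + norm z" using exp_rem2[OF assms] by simp
  also have "\<dots> \<le> 2 * norm z"
    using assms by (simp add: power2_eq_square mult_left_le)
  finally show ?thesis .
qed

lemma finite_Yn: "finite (Yn T N M0 M)"
  unfolding Yn_def by auto
lemma finite_Y0: "finite (Y0 M0 M)"
  unfolding Y0_def by auto

lemma finite_blk: "finite (blk T N)"
proof -
  have a: "{j::int. 2 * \<bar>j\<bar> < int n} \<subseteq> {-int n..int n}" for n by auto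
  have "finite {j::int. 2 * \<bar>j\<bar> < int n}" for n by (rule finite_subset[OF a]) auto
  then show ?thesis unfolding blk_def by auto
qed

lemma blk_ne: "T \<ge> 1 \<Longrightarrow> N \<ge> 1 \<Longrightarrow> (0,0,0,0) \<in> blk T N"
  unfolding blk_def by auto

lemma card_blk_pos: "T \<ge> 1 \<Longrightarrow> N \<ge> 1 \<Longrightarrow> card (blk T N) > 0"
  using blk_ne finite_blk by (metis card_gt_0_iff empty_iff)

lemma Yn_ne: "T \<ge> 1 \<Longrightarrow> N \<ge> 1 \<Longrightarrow> M0 \<ge> 1 \<Longrightarrow> M \<ge> 1 \<Longrightarrow> (0,0,0,0) \<in> Yn T N M0 M"
  unfolding Yn_def by auto
lemma Y0_ne: "M0 \<ge> 1 \<Longrightarrow> M \<ge> 1 \<Longrightarrow> (0,0,0,0) \<in> Y0 M0 M"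
  unfolding Y0_def by auto

lemma wrap_in: "T \<ge> 1 \<Longrightarrow> N \<ge> 1 \<Longrightarrow> M0 \<ge> 1 \<Longrightarrow> M \<ge> 1 \<Longrightarrow> wrapn T N M0 M u \<in> Yn T N M0 M"
  unfolding Yn_def wrapn_def by (cases u) auto

lemma wrap_id: "u \<in> Yn T N M0 M \<Longrightarrow> wrapn T N M0 M u = u"
  unfolding Yn_def wrapn_def by (cases u) auto

definition pneg :: "pt \<Rightarrow> pt" where
  "pneg e = (case e of (a,b,c,f) \<Rightarrow> (-a,-b,-c,-f))"

lemma wrap_back: "u \<in> Yn T N M0 M \<Longrightarrow>
   wrapn T N M0 M (padd (wrapn T N M0 M (padd u e)) (pneg e)) = u"
proof -
  assume u: "u \<in> Yn T N M0 M"
  obtain a b c f where uu: "u = (a,b,c,f)" by (cases u) auto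
  obtain a' b' c' f' where ee: "e = (a',b',c',f')" by (cases e) auto
  have m: "0 \<le> x \<Longrightarrow> x < n \<Longrightarrow> ((x + y) mod n - y) mod n = x" for x y n :: int
    by (metis add_diff_cancel_right' mod_diff_left_eq mod_pos_pos_trivial)
  show ?thesis using u unfolding uu ee wrapn_def padd_def pneg_def Yn_def
    by (simp add: m)
qed

lemma pneg_pneg[simp]: "pneg (pneg e) = e" by (cases e) (simp add: pneg_def)

lemma shift_sum:
  assumes "T \<ge> 1" "N \<ge> 1" "M0 \<ge> 1" "M \<ge> 1"
  shows "(\<Sum>u\<in>Yn T N M0 M. F (wrapn T N M0 M (padd u e))) = (\<Sum>u\<in>Yn T N M0 M. F u)"
proof -
  have "bij_betw (\<lambda>u. wrapn T N M0 M (padd u e)) (Yn T N M0 M) (Yn T N M0 M)"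
  proof (rule bij_betw_byWitness[where f'="\<lambda>u. wrapn T N M0 M (padd u (pneg e))"])
    show "\<forall>a\<in>Yn T N M0 M. wrapn T N M0 M (padd (wrapn T N M0 M (padd a e)) (pneg e)) = a"
      using wrap_back by blast
    show "\<forall>a\<in>Yn T N M0 M. wrapn T N M0 M (padd (wrapn T N M0 M (padd a (pneg e))) e) = a"
      using wrap_back[of _ T N M0 M "pneg e"] by simp
    show "(\<lambda>u. wrapn T N M0 M (padd u e)) ` Yn T N M0 M \<subseteq> Yn T N M0 M"
      using wrap_in[OF assms] by blast
    show "(\<lambda>u. wrapn T N M0 M (padd u (pneg e))) ` Yn T N M0 M \<subseteq> Yn T N M0 M"
      using wrap_in[OF assms] by blast
  qed
  then show ?thesis
    using sum.reindex_bij_betw[of "\<lambda>u. wrapn T N M0 M (padd u e)" "Yn T N M0 M" "Yn T N M0 M" F]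
    by simp
qed

lemma shift_pair:
  assumes "T \<ge> 1" "N \<ge> 1" "M0 \<ge> 1" "M \<ge> 1"
  fixes f g :: "pt \<Rightarrow> complex"
  shows "(\<Sum>u\<in>Yn T N M0 M. f u * g (wrapn T N M0 M (padd u e)))
       = (\<Sum>u\<in>Yn T N M0 M. g u * f (wrapn T N M0 M (padd u (pneg e))))"
proof -
  have "(\<Sum>u\<in>Yn T N M0 M. g u * f (wrapn T N M0 M (padd u (pneg e))))
     = (\<Sum>u\<in>Yn T N M0 M. g (wrapn T N M0 M (padd u e)) *
          f (wrapn T N M0 M (padd (wrapn T N M0 M (padd u e)) (pneg e))))"
    using shift_sum[OF assms, of "\<lambda>w. g w * f (wrapn T N M0 M (padd w (pneg e)))" e] by simp
  also have "\<dots> = (\<Sum>u\<in>Yn T N M0 M. f u * g (wrapn T N M0 M (padd u e)))"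
    by (rule sum.cong[OF refl]) (simp only: wrap_back mult.commute)
  finally show ?thesis by simp
qed

lemma lap_sym:
  assumes "T \<ge> 1" "N \<ge> 1" "M0 \<ge> 1" "M \<ge> 1"
  shows "ipn T N M0 M f (lap T N M0 M g) = ipn T N M0 M g (lap T N M0 M f)"
proof -
  let ?Y = "Yn T N M0 M" and ?w = "wrapn T N M0 M"
  have s: "(\<Sum>u\<in>?Y. f u * (g (?w (padd u e)) + g (?w (padd u (pneg e)))))
         = (\<Sum>u\<in>?Y. g u * (f (?w (padd u e)) + f (?w (padd u (pneg e)))))" for e
  proof -
    show ?thesis
      using shift_pair[OF assms, of f g e] shift_pair[OF assms, of f g "pneg e"]
      by (simp add: distrib_left sum.distrib)
  qed
  have i: "(\<Sum>u\<in>?Y. f u * g (?w u)) = (\<Sum>u\<in>?Y. g u * f (?w u))"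
    by (rule sum.cong) (auto simp: wrap_id)
  have e1: "pneg (0,1,0,0) = (0,-1,0,0)" "pneg (0,0,1,0) = (0,0,-1,0)" "pneg (0,0,0,1) = (0,0,0,-1)"
    by (auto simp: pneg_def)
  define S where "S f g e = (\<Sum>u\<in>?Y. f u * (g (?w (padd u e)) + g (?w (padd u (pneg e)))))"
    for f g :: "pt \<Rightarrow> complex" and e
  define S0 where "S0 f g = (\<Sum>u\<in>?Y. f u * g (?w u))" for f g :: "pt \<Rightarrow> complex"
  have ex: "(\<Sum>u\<in>?Y. f u * lap T N M0 M g u) = of_nat N ^ 2 *
      (S f g (0,1,0,0) + S f g (0,0,1,0) + S f g (0,0,0,1) - 6 * S0 f g)"
    for f g :: "pt \<Rightarrow> complex"
  proof -
    have "(\<Sum>u\<in>?Y. f u * lap T N M0 M g u) = (\<Sum>u\<in>?Y. of_nat N ^ 2 *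
       (f u * (g (?w (padd u (0,1,0,0))) + g (?w (padd u (pneg (0,1,0,0)))))
        + f u * (g (?w (padd u (0,0,1,0))) + g (?w (padd u (pneg (0,0,1,0)))))
        + f u * (g (?w (padd u (0,0,0,1))) + g (?w (padd u (pneg (0,0,0,1)))))
        - 6 * (f u * g (?w u))))"
      by (rule sum.cong[OF refl]) (simp add: lap_def e1 algebra_simps)
    also have "\<dots> = of_nat N ^ 2 *
      (S f g (0,1,0,0) + S f g (0,0,1,0) + S f g (0,0,0,1) - 6 * S0 f g)"
      unfolding S_def S0_def
      by (simp add: sum_distrib_left[symmetric] sum.distrib sum_subtractf)
    finally show ?thesis .
  qed
  have key: "(\<Sum>u\<in>?Y. f u * lap T N M0 M g u) = (\<Sum>u\<in>?Y. g u * lap T N M0 M f u)"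
    unfolding ex using s i unfolding S_def S0_def by simp
  show ?thesis unfolding ipn_def using key by simp
qed


lemma ipn_add_l: "ipn T N M0 M (\<lambda>u. f u + g u) h = ipn T N M0 M f h + ipn T N M0 M g h"
  unfolding ipn_def by (simp add: algebra_simps sum.distrib)
lemma ipn_diff_l: "ipn T N M0 M (\<lambda>u. f u - g u) h = ipn T N M0 M f h - ipn T N M0 M g h"
  unfolding ipn_def by (simp add: algebra_simps sum_subtractf)
lemma ipn_mult_l: "ipn T N M0 M (\<lambda>u. c * f u) h = c * ipn T N M0 M f h"
  unfolding ipn_def by (simp add: algebra_simps sum_distrib_left)
lemma ipn_neg_l: "ipn T N M0 M (\<lambda>u. - f u) h = - ipn T N M0 M f h"
  unfolding ipn_def by (simp add: algebra_simps sum_negf)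
lemma ipn_comm: "ipn T N M0 M f g = ipn T N M0 M g f"
  unfolding ipn_def by (simp add: mult.commute)
lemma ipn_add_r: "ipn T N M0 M h (\<lambda>u. f u + g u) = ipn T N M0 M h f + ipn T N M0 M h g"
  using ipn_add_l ipn_comm by metis
lemma ipn_diff_r: "ipn T N M0 M h (\<lambda>u. f u - g u) = ipn T N M0 M h f - ipn T N M0 M h g"
  using ipn_diff_l ipn_comm by metis
lemma ipn_mult_r: "ipn T N M0 M h (\<lambda>u. c * f u) = c * ipn T N M0 M h f"
  using ipn_mult_l ipn_comm by metis
lemma ipn_neg_r: "ipn T N M0 M h (\<lambda>u. - f u) = - ipn T N M0 M h f"
  using ipn_neg_l ipn_comm by metis

lemmas ipn_lin = ipn_add_l ipn_diff_l ipn_mult_l ipn_neg_l ipn_add_r ipn_diff_r ipn_mult_r ipn_neg_r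

lemma ip0_add_l: "ip0 M0 M (\<lambda>u. f u + g u) h = ip0 M0 M f h + ip0 M0 M g h"
  unfolding ip0_def by (simp add: algebra_simps sum.distrib)
lemma ip0_diff_l: "ip0 M0 M (\<lambda>u. f u - g u) h = ip0 M0 M f h - ip0 M0 M g h"
  unfolding ip0_def by (simp add: algebra_simps sum_subtractf)
lemma ip0_mult_l: "ip0 M0 M (\<lambda>u. c * f u) h = c * ip0 M0 M f h"
  unfolding ip0_def by (simp add: algebra_simps sum_distrib_left)
lemma ip0_neg_l: "ip0 M0 M (\<lambda>u. - f u) h = - ip0 M0 M f h"
  unfolding ip0_def by (simp add: algebra_simps sum_negf)
lemma ip0_comm: "ip0 M0 M f g = ip0 M0 M g f"
  unfolding ip0_def by (simp add: mult.commute)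
lemma ip0_add_r: "ip0 M0 M h (\<lambda>u. f u + g u) = ip0 M0 M h f + ip0 M0 M h g"
  using ip0_add_l ip0_comm by metis
lemma ip0_diff_r: "ip0 M0 M h (\<lambda>u. f u - g u) = ip0 M0 M h f - ip0 M0 M h g"
  using ip0_diff_l ip0_comm by metis
lemma ip0_mult_r: "ip0 M0 M h (\<lambda>u. c * f u) = c * ip0 M0 M h f"
  using ip0_mult_l ip0_comm by metis
lemma ip0_neg_r: "ip0 M0 M h (\<lambda>u. - f u) = - ip0 M0 M h f"
  using ip0_neg_l ip0_comm by metis

lemmas ip0_lin = ip0_add_l ip0_diff_l ip0_mult_l ip0_neg_l ip0_add_r ip0_diff_r ip0_mult_r ip0_neg_r

lemma kop_add: "kop T N M0 M K (\<lambda>u. f u + g u) = (\<lambda>u. kop T N M0 M K f u + kop T N M0 M K g u)"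
  unfolding kop_def by (simp add: algebra_simps sum.distrib)
lemma kop_diff: "kop T N M0 M K (\<lambda>u. f u - g u) = (\<lambda>u. kop T N M0 M K f u - kop T N M0 M K g u)"
  unfolding kop_def by (simp add: algebra_simps sum_subtractf)
lemma kop_mult: "kop T N M0 M K (\<lambda>u. c * f u) = (\<lambda>u. c * kop T N M0 M K f u)"
  unfolding kop_def by (simp add: algebra_simps sum_distrib_left)

lemma lap_add: "lap T N M0 M (\<lambda>u. f u + g u) = (\<lambda>u. lap T N M0 M f u + lap T N M0 M g u)"
  unfolding lap_def by (simp add: algebra_simps)
lemma lap_diff: "lap T N M0 M (\<lambda>u. f u - g u) = (\<lambda>u. lap T N M0 M f u - lap T N M0 M g u)"
  unfolding lap_def by (simp add: algebra_simps)
lemma lap_mult: "lap T N M0 M (\<lambda>u. c * f u) = (\<lambda>u. c * lap T N M0 M f u)"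
  unfolding lap_def by (simp add: algebra_simps)
lemma lap_const: "lap T N M0 M (\<lambda>u. c) u = 0"
  unfolding lap_def by simp

lemma Qn_add: "Qn T N M0 M (\<lambda>u. f u + g u) = (\<lambda>u. Qn T N M0 M f u + Qn T N M0 M g u)"
  unfolding Qn_def by (simp add: algebra_simps sum.distrib)
lemma Qn_diff: "Qn T N M0 M (\<lambda>u. f u - g u) = (\<lambda>u. Qn T N M0 M f u - Qn T N M0 M g u)"
  unfolding Qn_def by (simp add: algebra_simps sum_subtractf)
lemma Qn_mult: "Qn T N M0 M (\<lambda>u. c * f u) = (\<lambda>u. c * Qn T N M0 M f u)"
  unfolding Qn_def by (simp add: algebra_simps sum_distrib_left)
lemma Qn_const: "T \<ge> 1 \<Longrightarrow> N \<ge> 1 \<Longrightarrow> Qn T N M0 M (\<lambda>u. c) x = c"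
  unfolding Qn_def using card_blk_pos[of T N] by simp

lemma fiber_sum:
  fixes F :: "'b \<Rightarrow> complex"
  assumes "finite B" "finite Y" "h ` B \<subseteq> Y"
  shows "(\<Sum>u\<in>Y. of_nat (card {j\<in>B. h j = u}) * F u) = (\<Sum>j\<in>B. F (h j))"
proof -
  have "(\<Sum>u\<in>Y. of_nat (card {j\<in>B. h j = u}) * F u) = (\<Sum>u\<in>Y. \<Sum>j\<in>B. if h j = u then F u else 0)"
  proof (rule sum.cong[OF refl])
    fix u
    have "of_nat (card {j\<in>B. h j = u}) * F u = (\<Sum>j\<in>{j\<in>B. h j = u}. F u)" by simp
    also have "\<dots> = (\<Sum>j\<in>B. if h j = u then F u else 0)"
      by (rule sum.inter_filter[OF assms(1)])
    finally show "of_nat (card {j\<in>B. h j = u}) * F u = (\<Sum>j\<in>B. if h j = u then F u else 0)" .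
  qed
  also have "\<dots> = (\<Sum>j\<in>B. \<Sum>u\<in>Y. if h j = u then F u else 0)" by (rule sum.swap)
  also have "\<dots> = (\<Sum>j\<in>B. F (h j))"
    using assms by (intro sum.cong[OF refl]) (auto simp: sum.delta')
  finally show ?thesis .
qed

lemma Q_adj:
  assumes "T \<ge> 1" "N \<ge> 1" "M0 \<ge> 1" "M \<ge> 1"
  shows "ipn T N M0 M f (Qn_adj T N M0 M g) = ip0 M0 M (Qn T N M0 M f) g"
proof -
  let ?c = "of_nat (card (blk T N)) :: complex"
  let ?h = "\<lambda>x j. wrapn T N M0 M (padd (emb T N x) j)"
  have TN: "(1 / of_nat T) * (1 / of_nat N) ^ 3 * (of_nat T * of_nat N ^ 3) = (1::complex)"
    using assms by (simp add: field_simps)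
  have "ipn T N M0 M f (Qn_adj T N M0 M g) =
     (1 / of_nat T) * (1 / of_nat N) ^ 3 * (of_nat T * of_nat N ^ 3) * (1/?c) *
     (\<Sum>u\<in>Yn T N M0 M. \<Sum>x\<in>Y0 M0 M. f u * (of_nat (card {j\<in>blk T N. ?h x j = u}) * g x))"
    unfolding ipn_def Qn_adj_def by (simp add: sum_distrib_left mult_ac)
  also have "\<dots> = (1/?c) * (\<Sum>x\<in>Y0 M0 M. g x * (\<Sum>u\<in>Yn T N M0 M. of_nat (card {j\<in>blk T N. ?h x j = u}) * f u))"
    unfolding TN by (subst sum.swap) (simp add: sum_distrib_left mult_ac)
  also have "\<dots> = (1/?c) * (\<Sum>x\<in>Y0 M0 M. g x * (\<Sum>j\<in>blk T N. f (?h x j)))"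
    using fiber_sum[OF finite_blk finite_Yn] wrap_in[OF assms] by (simp add: image_subset_iff)
  also have "\<dots> = ip0 M0 M (Qn T N M0 M f) g"
    unfolding ip0_def Qn_def by (simp add: sum_distrib_left mult_ac)
  finally show ?thesis .
qed

lemma kop_adj_tr: "ipn T N M0 M f (kop_adj T N M0 M K g) = ipn T N M0 M g (kop T N M0 M K f)"
  unfolding ipn_def kop_adj_def kop_def
  by (simp add: sum_distrib_left, subst sum.swap, simp add: mult_ac)


lemma ipn_cong: "(\<And>u. u \<in> Yn T N M0 M \<Longrightarrow> g u = g' u) \<Longrightarrow> ipn T N M0 M f g = ipn T N M0 M f g'"
  unfolding ipn_def by (metis (no_types, lifting) sum.cong)

lemma main_identity:
  fixes X H R \<Theta> :: field and K d \<mu>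
  assumes pos: "T \<ge> 1" "N \<ge> 1" "M0 \<ge> 1" "M \<ge> 1"
    and antisym: "\<forall>f g. ipn T N M0 M (kop T N M0 M K f) g = - ipn T N M0 M f (kop T N M0 M K g)"
    and E1: "\<And>u. u \<in> Yn T N M0 M \<Longrightarrow> 2 * of_real \<mu> * X u - lap T N M0 M X u
          + \<i> * of_real d * kop_adj T N M0 M K H u
          + Qn_adj T N M0 M (Qn T N M0 M X) u = Qn_adj T N M0 M R u"
    and E2: "\<And>u. u \<in> Yn T N M0 M \<Longrightarrow> \<i> * of_real d * kop T N M0 M K X u - lap T N M0 M H u
          + Qn_adj T N M0 M (Qn T N M0 M H) u = Qn_adj T N M0 M \<Theta> u"
  shows "ip0 M0 M (\<lambda>x. R x - Qn T N M0 M X x) (\<lambda>x. R x - Qn T N M0 M X x)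
       + ip0 M0 M (\<lambda>x. \<Theta> x - Qn T N M0 M H x) (\<lambda>x. \<Theta> x - Qn T N M0 M H x)
       + ipn T N M0 M (\<lambda>u. X u - \<i> * H u)
           (\<lambda>u. - of_real d * kop T N M0 M K (\<lambda>u. X u + \<i> * H u) u - lap T N M0 M (\<lambda>u. X u + \<i> * H u) u)
       + 2 * of_real \<mu> * ipn T N M0 M X X
     = ip0 M0 M R (\<lambda>x. R x - Qn T N M0 M X x) + ip0 M0 M \<Theta> (\<lambda>x. \<Theta> x - Qn T N M0 M H x)"
proof -
  let ?ipn = "ipn T N M0 M" and ?ip0 = "ip0 M0 M" and ?k = "kop T N M0 M K" and ?l = "lap T N M0 M"
    and ?Q = "Qn T N M0 M"
  have A: "?ipn X (\<lambda>u. 2 * of_real \<mu> * X u - lap T N M0 M X u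
          + \<i> * of_real d * kop_adj T N M0 M K H u
          + Qn_adj T N M0 M (Qn T N M0 M X) u) = ?ipn X (Qn_adj T N M0 M R)"
    by (rule ipn_cong) (rule E1)
  have B: "?ipn H (\<lambda>u. \<i> * of_real d * kop T N M0 M K X u - lap T N M0 M H u
          + Qn_adj T N M0 M (Qn T N M0 M H) u) = ?ipn H (Qn_adj T N M0 M \<Theta>)"
    by (rule ipn_cong) (rule E2)
  have A': "2 * of_real \<mu> * ?ipn X X - ?ipn X (?l X) + \<i> * of_real d * ?ipn H (?k X)
     + ?ip0 (?Q X) (?Q X) = ?ip0 (?Q X) R"
    using A by (simp add: ipn_lin kop_adj_tr Q_adj[OF pos])
  have B': "\<i> * of_real d * ?ipn H (?k X) - ?ipn H (?l H) + ?ip0 (?Q H) (?Q H) = ?ip0 (?Q H) \<Theta>"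
    using B by (simp add: ipn_lin Q_adj[OF pos])
  have k0: "?ipn F (?k F) = 0" for F
  proof -
    have "?ipn (?k F) F = - ?ipn F (?k F)" using antisym by blast
    then have "?ipn F (?k F) = - ?ipn F (?k F)" by (simp add: ipn_comm[of T N M0 M "?k F"])
    then show ?thesis by simp
  qed
  have k1: "?ipn X (?k X) = 0" "?ipn H (?k H) = 0" by (rule k0)+
  have k2: "?ipn X (?k H) = - ?ipn H (?k X)"
    using antisym ipn_comm[of T N M0 M] by metis
  have l1: "?ipn X (?l H) = ?ipn H (?l X)" by (rule lap_sym[OF pos])
  have c1: "?ip0 R (?Q X) = ?ip0 (?Q X) R" "?ip0 \<Theta> (?Q H) = ?ip0 (?Q H) \<Theta>"
    by (rule ip0_comm)+
  have S: "(2 * of_real \<mu> * ?ipn X X - ?ipn X (?l X) + \<i> * of_real d * ?ipn H (?k X)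
     + ?ip0 (?Q X) (?Q X)) + (\<i> * of_real d * ?ipn H (?k X) - ?ipn H (?l H) + ?ip0 (?Q H) (?Q H))
     = ?ip0 (?Q X) R + ?ip0 (?Q H) \<Theta>" using A' B' by simp
  show ?thesis
    apply (simp add: ip0_lin ipn_lin kop_add kop_mult lap_add lap_mult k1 k2 l1 c1)
    using S by (simp add: algebra_simps)
qed

lemma sum_bound:
  fixes F :: "'b \<Rightarrow> complex"
  assumes "\<And>x. x \<in> S \<Longrightarrow> cmod (F x) \<le> A"
  shows "cmod (\<Sum>x\<in>S. F x) \<le> of_nat (card S) * A"
proof -
  have "cmod (\<Sum>x\<in>S. F x) \<le> (\<Sum>x\<in>S. cmod (F x))" by (rule norm_sum)
  also have "\<dots> \<le> (\<Sum>x\<in>S. A)" using assms by (intro sum_mono) auto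
  also have "\<dots> = of_nat (card S) * A" by simp
  finally show ?thesis .
qed

definition Wn :: "nat \<Rightarrow> nat \<Rightarrow> real" where "Wn T N = (1 / real T) * (1 / real N) ^ 3"

lemma ipn_bound:
  assumes "\<And>u. u \<in> Yn T N M0 M \<Longrightarrow> cmod (f u * g u) \<le> A"
  shows "cmod (ipn T N M0 M f g) \<le> Wn T N * card (Yn T N M0 M) * A"
proof -
  have "cmod (ipn T N M0 M f g) = Wn T N * cmod (\<Sum>u\<in>Yn T N M0 M. f u * g u)"
    unfolding ipn_def Wn_def by (simp add: norm_mult norm_divide norm_power)
  also have "\<dots> \<le> Wn T N * (card (Yn T N M0 M) * A)"
    by (intro mult_left_mono sum_bound assms) (auto simp: Wn_def)
  finally show ?thesis by simp
qed

definition BK :: "nat \<Rightarrow> nat \<Rightarrow> nat \<Rightarrow> nat \<Rightarrow> (pt \<Rightarrow> pt \<Rightarrow> complex) \<Rightarrow> real" where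
  "BK T N M0 M K = (\<Sum>u\<in>Yn T N M0 M. \<Sum>u'\<in>Yn T N M0 M. cmod (K u u'))"

lemma kop_bound:
  assumes "\<And>u. u \<in> Yn T N M0 M \<Longrightarrow> cmod (g u) \<le> A" "u \<in> Yn T N M0 M" "A \<ge> 0"
  shows "cmod (kop T N M0 M K g u) \<le> BK T N M0 M K * A"
proof -
  have "cmod (kop T N M0 M K g u) \<le> (\<Sum>u'\<in>Yn T N M0 M. cmod (K u u' * g u'))"
    unfolding kop_def by (rule norm_sum)
  also have "\<dots> \<le> (\<Sum>u'\<in>Yn T N M0 M. cmod (K u u') * A)"
    using assms by (intro sum_mono) (auto simp: norm_mult intro: mult_left_mono)
  also have "\<dots> = (\<Sum>u'\<in>Yn T N M0 M. cmod (K u u')) * A" by (simp add: sum_distrib_right)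
  also have "\<dots> \<le> BK T N M0 M K * A"
  proof (intro mult_right_mono \<open>A \<ge> 0\<close>)
    show "(\<Sum>u'\<in>Yn T N M0 M. cmod (K u u')) \<le> BK T N M0 M K"
      unfolding BK_def
      using member_le_sum[of u "Yn T N M0 M" "\<lambda>u. \<Sum>u'\<in>Yn T N M0 M. cmod (K u u')"] assms(2) finite_Yn
      by (simp add: sum_nonneg)
  qed
  finally show ?thesis .
qed

lemma BK_nonneg: "BK T N M0 M K \<ge> 0" unfolding BK_def by (simp add: sum_nonneg)

lemma lap_bound:
  assumes pos: "T \<ge> 1" "N \<ge> 1" "M0 \<ge> 1" "M \<ge> 1"
    and "\<And>u. u \<in> Yn T N M0 M \<Longrightarrow> cmod (g u) \<le> A"
  shows "cmod (lap T N M0 M g u) \<le> 12 * real N ^ 2 * A"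
proof -
  have b: "cmod (g (wrapn T N M0 M w)) \<le> A" for w using assms wrap_in[OF pos] by blast
  let ?g = "\<lambda>w. g (wrapn T N M0 M w)"
  have t: "cmod (a1 + a2 - 2 * a3) \<le> 4 * A" if "cmod a1 \<le> A" "cmod a2 \<le> A" "cmod a3 \<le> A" for a1 a2 a3 :: complex
  proof -
    have "cmod (a1 + a2 - 2 * a3) \<le> cmod (a1 + a2) + cmod (2 * a3)"
      by (rule norm_triangle_ineq4)
    also have "\<dots> \<le> cmod a1 + cmod a2 + cmod (2 * a3)"
      using norm_triangle_ineq[of a1 a2] by simp
    finally have "cmod (a1 + a2 - 2 * a3) \<le> cmod a1 + cmod a2 + cmod (2 * a3)" .
    then show ?thesis using that by (simp add: norm_mult)
  qed
  have "cmod (lap T N M0 M g u) = real N ^ 2 *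
      cmod ((?g (padd u (0,1,0,0)) + ?g (padd u (0,-1,0,0)) - 2 * ?g u)
    + (?g (padd u (0,0,1,0)) + ?g (padd u (0,0,-1,0)) - 2 * ?g u)
    + (?g (padd u (0,0,0,1)) + ?g (padd u (0,0,0,-1)) - 2 * ?g u))"
    unfolding lap_def by (simp add: norm_mult norm_power)
  also have "\<dots> \<le> real N ^ 2 * (4*A + 4*A + 4*A)"
  proof (rule mult_left_mono)
    fix P1 P2 P3 :: complex
    have s3: "cmod (P1 + P2 + P3) \<le> cmod P1 + cmod P2 + cmod P3" for P1 P2 P3 :: complex
      by (metis add_mono norm_triangle_ineq order_trans order_refl)
    show "cmod ((?g (padd u (0,1,0,0)) + ?g (padd u (0,-1,0,0)) - 2 * ?g u)
    + (?g (padd u (0,0,1,0)) + ?g (padd u (0,0,-1,0)) - 2 * ?g u)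
    + (?g (padd u (0,0,0,1)) + ?g (padd u (0,0,0,-1)) - 2 * ?g u)) \<le> 4*A + 4*A + 4*A"
      by (rule order_trans[OF s3] add_mono t b)+
  qed simp
  finally show ?thesis by simp
qed

lemma Qn_bound:
  assumes pos: "T \<ge> 1" "N \<ge> 1" "M0 \<ge> 1" "M \<ge> 1"
    and "\<And>u. u \<in> Yn T N M0 M \<Longrightarrow> cmod (g u) \<le> A"
  shows "cmod (Qn T N M0 M g x) \<le> A"
proof -
  have c: "card (blk T N) > 0" using card_blk_pos pos by auto
  have "cmod (Qn T N M0 M g x) = (1 / card (blk T N)) *
      cmod (\<Sum>j\<in>blk T N. g (wrapn T N M0 M (padd (emb T N x) j)))"
    unfolding Qn_def by (simp add: norm_mult norm_divide)
  also have "\<dots> \<le> (1 / card (blk T N)) * (card (blk T N) * A)"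
    by (intro mult_left_mono sum_bound) (use assms wrap_in[OF pos] in auto)
  also have "\<dots> = A" using c by simp
  finally show ?thesis .
qed


lemma An_expand:
  fixes r :: real
  assumes vr: "v * r^2 = \<mu>"
  shows "An T N M0 M K d \<mu> v (\<lambda>x. of_real r * exp (R x - \<i> * \<Theta> x)) (\<lambda>x. of_real r * exp (R x + \<i> * \<Theta> x))
            (\<lambda>u. of_real r * exp (X u - \<i> * H u)) (\<lambda>u. of_real r * exp (X u + \<i> * H u))
   = of_real (r^2) * (ip0 M0 M (\<lambda>x. exp (R x - \<i> * \<Theta> x) - Qn T N M0 M (\<lambda>u. exp (X u - \<i> * H u)) x)
                               (\<lambda>x. exp (R x + \<i> * \<Theta> x) - Qn T N M0 M (\<lambda>u. exp (X u + \<i> * H u)) x)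
     + ipn T N M0 M (\<lambda>u. exp (X u - \<i> * H u))
         (\<lambda>u. - of_real d * kop T N M0 M K (\<lambda>u. exp (X u + \<i> * H u)) u - lap T N M0 M (\<lambda>u. exp (X u + \<i> * H u)) u)
     + ipn T N M0 M (\<lambda>u. - of_real \<mu> * exp (2 * X u) + of_real \<mu> / 2 * exp (4 * X u)) (\<lambda>_. 1))"
proof -
  let ?r = "of_real r :: complex"
  have t1: "ip0 M0 M (\<lambda>x. ?r * exp (R x - \<i> * \<Theta> x) - Qn T N M0 M (\<lambda>u. ?r * exp (X u - \<i> * H u)) x)
                      (\<lambda>x. ?r * exp (R x + \<i> * \<Theta> x) - Qn T N M0 M (\<lambda>u. ?r * exp (X u + \<i> * H u)) x)
     = ?r * ?r * ip0 M0 M (\<lambda>x. exp (R x - \<i> * \<Theta> x) - Qn T N M0 M (\<lambda>u. exp (X u - \<i> * H u)) x)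
                               (\<lambda>x. exp (R x + \<i> * \<Theta> x) - Qn T N M0 M (\<lambda>u. exp (X u + \<i> * H u)) x)"
    unfolding Qn_mult ip0_def by (simp add: sum_distrib_left algebra_simps)
  have t2: "ipn T N M0 M (\<lambda>u. ?r * exp (X u - \<i> * H u))
         (\<lambda>u. - of_real d * kop T N M0 M K (\<lambda>u. ?r * exp (X u + \<i> * H u)) u - lap T N M0 M (\<lambda>u. ?r * exp (X u + \<i> * H u)) u)
      = ?r * ?r * ipn T N M0 M (\<lambda>u. exp (X u - \<i> * H u))
         (\<lambda>u. - of_real d * kop T N M0 M K (\<lambda>u. exp (X u + \<i> * H u)) u - lap T N M0 M (\<lambda>u. exp (X u + \<i> * H u)) u)"
    unfolding kop_mult lap_mult ipn_def by (simp add: sum_distrib_left algebra_simps)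
  have e2: "exp (X u - \<i> * H u) * exp (X u + \<i> * H u) = exp (2 * X u)" for u
    by (simp add: exp_add[symmetric])
  have vr': "of_real v * (?r * ?r) = of_real \<mu>"
    using vr by (metis of_real_mult power2_eq_square)
  have t3: "- of_real \<mu> * ipn T N M0 M (\<lambda>u. ?r * exp (X u - \<i> * H u)) (\<lambda>u. ?r * exp (X u + \<i> * H u))
      + of_real v / 2 * ipn T N M0 M (\<lambda>u. ?r * exp (X u - \<i> * H u) * (?r * exp (X u + \<i> * H u)))
                                     (\<lambda>u. ?r * exp (X u - \<i> * H u) * (?r * exp (X u + \<i> * H u)))
     = ?r * ?r * ipn T N M0 M (\<lambda>u. - of_real \<mu> * exp (2 * X u) + of_real \<mu> / 2 * exp (4 * X u)) (\<lambda>_. 1)"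
  proof -
    have p1: "?r * exp (X u - \<i> * H u) * (?r * exp (X u + \<i> * H u)) = ?r * ?r * exp (2 * X u)" for u
      using e2[of u] by (simp add: algebra_simps)
    have p2: "exp (2 * X u) * exp (2 * X u) = exp (4 * X u)" for u
      by (simp add: exp_add[symmetric])
    have one: "ipn T N M0 M f g = ipn T N M0 M (\<lambda>u. f u * g u) (\<lambda>_. 1)" for f g
      unfolding ipn_def by simp
    have pw: "- of_real \<mu> * (?r * exp (X u - \<i> * H u) * (?r * exp (X u + \<i> * H u)))
       + of_real v / 2 * ((?r * exp (X u - \<i> * H u) * (?r * exp (X u + \<i> * H u)))
                         * (?r * exp (X u - \<i> * H u) * (?r * exp (X u + \<i> * H u))))
       = ?r * ?r * (- of_real \<mu> * exp (2 * X u) + of_real \<mu> / 2 * exp (4 * X u))" for u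
      unfolding p1 p2[symmetric] vr'[symmetric] by (simp add: algebra_simps)
    have "- of_real \<mu> * ipn T N M0 M (\<lambda>u. ?r * exp (X u - \<i> * H u)) (\<lambda>u. ?r * exp (X u + \<i> * H u))
      + of_real v / 2 * ipn T N M0 M (\<lambda>u. ?r * exp (X u - \<i> * H u) * (?r * exp (X u + \<i> * H u)))
                                     (\<lambda>u. ?r * exp (X u - \<i> * H u) * (?r * exp (X u + \<i> * H u)))
      = ipn T N M0 M (\<lambda>u. - of_real \<mu> * (?r * exp (X u - \<i> * H u) * (?r * exp (X u + \<i> * H u)))
       + of_real v / 2 * ((?r * exp (X u - \<i> * H u) * (?r * exp (X u + \<i> * H u)))
                         * (?r * exp (X u - \<i> * H u) * (?r * exp (X u + \<i> * H u))))) (\<lambda>_. 1)"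
      by (subst (1 2) one) (simp only: ipn_add_l ipn_mult_l)
    also have "\<dots> = ipn T N M0 M (\<lambda>u. ?r * ?r * (- of_real \<mu> * exp (2 * X u) + of_real \<mu> / 2 * exp (4 * X u))) (\<lambda>_. 1)"
      unfolding pw ..
    also have "\<dots> = ?r * ?r * ipn T N M0 M (\<lambda>u. - of_real \<mu> * exp (2 * X u) + of_real \<mu> / 2 * exp (4 * X u)) (\<lambda>_. 1)"
      by (rule ipn_mult_l)
    finally show ?thesis .
  qed
  show ?thesis
    unfolding An_def t1 t2 using t3 by (simp add: algebra_simps power2_eq_square)
qed


lemma prod_err:
  fixes L1 L2 S1 S2 :: complex and m :: real
  assumes "cmod L1 \<le> 4*m" "cmod L2 \<le> 4*m" "cmod S1 \<le> 8*m^2" "cmod S2 \<le> 8*m^2" "0 \<le> m" "m \<le> 1"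
  shows "cmod ((L1 + S1) * (L2 + S2) - L1 * L2) \<le> 128 * m^3"
proof -
  have e: "(L1 + S1) * (L2 + S2) - L1 * L2 = L1 * S2 + S1 * L2 + S1 * S2" by (simp add: algebra_simps)
  have a: "cmod (L1 * S2) \<le> 4*m * (8*m^2)"
    unfolding norm_mult using assms by (intro mult_mono) auto
  have b: "cmod (S1 * L2) \<le> 8*m^2 * (4*m)"
    unfolding norm_mult using assms by (intro mult_mono) auto
  have c: "cmod (S1 * S2) \<le> 8*m^2 * (8*m^2)"
    unfolding norm_mult using assms by (intro mult_mono) auto
  have d: "8*m^2 * (8*m^2) \<le> 64 * m^3"
  proof -
    have "m^3 * m \<le> m^3 * 1" using assms by (intro mult_left_mono) auto
    then show ?thesis by (simp add: power2_eq_square power3_eq_cube algebra_simps)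
  qed
  have "cmod (L1 * S2 + S1 * L2 + S1 * S2) \<le> cmod (L1 * S2) + cmod (S1 * L2) + cmod (S1 * S2)"
    using norm_triangle_ineq[of "L1 * S2 + S1 * L2" "S1 * S2"] norm_triangle_ineq[of "L1 * S2" "S1 * L2"] by linarith
  also have "\<dots> \<le> 4*m * (8*m^2) + 8*m^2 * (4*m) + 64 * m^3" using a b c d by linarith
  also have "\<dots> = 128 * m^3" by (simp add: power2_eq_square power3_eq_cube)
  finally show ?thesis unfolding e .
qed

lemma cmod_pm: "cmod (a + \<i> * b) \<le> cmod a + cmod b" "cmod (a - \<i> * b) \<le> cmod a + cmod b"
  using norm_triangle_ineq[of a "\<i> * b"] norm_triangle_ineq4[of a "\<i> * b"] by (simp_all add: norm_mult)

lemma Qexp: "T \<ge> 1 \<Longrightarrow> N \<ge> 1 \<Longrightarrow> Qn T N M0 M (\<lambda>u. exp (f u)) x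
   = 1 + Qn T N M0 M f x + Qn T N M0 M (\<lambda>u. exp (f u) - 1 - f u) x"
proof -
  assume TN: "T \<ge> 1" "N \<ge> 1"
  have "(\<lambda>u. exp (f u)) = (\<lambda>u. (1 + f u) + (exp (f u) - 1 - f u))" by simp
  then have "Qn T N M0 M (\<lambda>u. exp (f u)) x = Qn T N M0 M (\<lambda>u. (1 + f u) + (exp (f u) - 1 - f u)) x" by simp
  also have "\<dots> = 1 + Qn T N M0 M f x + Qn T N M0 M (\<lambda>u. exp (f u) - 1 - f u) x"
    unfolding Qn_add using Qn_const[OF TN] by simp
  finally show ?thesis .
qed

lemma err1:
  fixes R \<Theta> X H :: field and m :: real
  assumes pos: "T \<ge> 1" "N \<ge> 1" "M0 \<ge> 1" "M \<ge> 1"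
    and m: "0 \<le> m" "m \<le> 1/8"
    and b0: "\<And>x. x \<in> Y0 M0 M \<Longrightarrow> cmod (R x) \<le> m \<and> cmod (\<Theta> x) \<le> m"
    and bn: "\<And>u. u \<in> Yn T N M0 M \<Longrightarrow> cmod (X u) \<le> m \<and> cmod (H u) \<le> m"
  shows "cmod (ip0 M0 M (\<lambda>x. exp (R x - \<i> * \<Theta> x) - Qn T N M0 M (\<lambda>u. exp (X u - \<i> * H u)) x)
                         (\<lambda>x. exp (R x + \<i> * \<Theta> x) - Qn T N M0 M (\<lambda>u. exp (X u + \<i> * H u)) x)
      - (ip0 M0 M (\<lambda>x. R x - Qn T N M0 M X x) (\<lambda>x. R x - Qn T N M0 M X x)
       + ip0 M0 M (\<lambda>x. \<Theta> x - Qn T N M0 M H x) (\<lambda>x. \<Theta> x - Qn T N M0 M H x)))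
     \<le> card (Y0 M0 M) * (128 * m^3)"
proof -
  let ?Q = "Qn T N M0 M"
  have pt: "cmod ((exp (R x - \<i> * \<Theta> x) - ?Q (\<lambda>u. exp (X u - \<i> * H u)) x)
                * (exp (R x + \<i> * \<Theta> x) - ?Q (\<lambda>u. exp (X u + \<i> * H u)) x)
         - ((R x - ?Q X x) * (R x - ?Q X x) + (\<Theta> x - ?Q H x) * (\<Theta> x - ?Q H x))) \<le> 128 * m^3"
    if x: "x \<in> Y0 M0 M" for x
  proof -
    have sgn: "cmod (s * z) \<le> cmod z" if "cmod s \<le> 1" for s z :: complex
      using that by (simp add: norm_mult mult_left_le_one_le)
    have gen: "cmod (exp (R x + s * \<Theta> x) - ?Q (\<lambda>u. exp (X u + s * H u)) x
               - ((R x + s * \<Theta> x) - (?Q X x + s * ?Q H x))) \<le> 8 * m^2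
           \<and> cmod ((R x + s * \<Theta> x) - (?Q X x + s * ?Q H x)) \<le> 4 * m" if s: "cmod s = 1" for s
    proof -
      let ?z = "R x + s * \<Theta> x"
      have z: "cmod ?z \<le> 2*m"
        using norm_triangle_ineq[of "R x" "s * \<Theta> x"] b0[OF x] s by (simp add: norm_mult)
      have qu: "cmod (X u + s * H u) \<le> 2*m" if "u \<in> Yn T N M0 M" for u
        using norm_triangle_ineq[of "X u" "s * H u"] bn[OF that] s by (simp add: norm_mult)
      have Qq: "?Q (\<lambda>u. X u + s * H u) x = ?Q X x + s * ?Q H x"
        by (simp add: Qn_add Qn_mult)
      have Qqb: "cmod (?Q X x + s * ?Q H x) \<le> 2*m"
        using Qn_bound[OF pos, where g="\<lambda>u. X u + s * H u" and A="2*m" and x=x, OF qu] Qq by simp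
      have sq: "cmod (exp (X u + s * H u) - 1 - (X u + s * H u)) \<le> 4 * m^2" if "u \<in> Yn T N M0 M" for u
      proof -
        have "cmod (X u + s * H u) \<le> 1/2" using qu[OF that] m by simp
        then have "cmod (exp (X u + s * H u) - 1 - (X u + s * H u)) \<le> cmod (X u + s * H u) ^ 2"
          by (rule exp_rem2)
        also have "\<dots> \<le> (2*m)^2" using qu[OF that] by (intro power_mono) auto
        finally show ?thesis by (simp add: power_mult_distrib)
      qed
      have Qs: "cmod (?Q (\<lambda>u. exp (X u + s * H u) - 1 - (X u + s * H u)) x) \<le> 4 * m^2"
        by (rule Qn_bound[OF pos sq])
      have sz: "cmod (exp ?z - 1 - ?z) \<le> 4 * m^2"
      proof -
        have "cmod ?z \<le> 1/2" using z m by simp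
        then have "cmod (exp ?z - 1 - ?z) \<le> cmod ?z ^ 2" by (rule exp_rem2)
        also have "\<dots> \<le> (2*m)^2" using z by (intro power_mono) auto
        finally show ?thesis by (simp add: power_mult_distrib)
      qed
      have eq: "exp ?z - ?Q (\<lambda>u. exp (X u + s * H u)) x - (?z - (?Q X x + s * ?Q H x))
          = (exp ?z - 1 - ?z) - ?Q (\<lambda>u. exp (X u + s * H u) - 1 - (X u + s * H u)) x"
        using Qq by (simp add: Qexp[OF pos(1,2)])
      have "cmod (exp ?z - ?Q (\<lambda>u. exp (X u + s * H u)) x - (?z - (?Q X x + s * ?Q H x))) \<le> 8 * m^2"
        unfolding eq using norm_triangle_ineq4[of "exp ?z - 1 - ?z" "?Q (\<lambda>u. exp (X u + s * H u) - 1 - (X u + s * H u)) x"] sz Qs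
        by linarith
      moreover have "cmod (?z - (?Q X x + s * ?Q H x)) \<le> 4 * m"
        using norm_triangle_ineq4[of ?z "?Q X x + s * ?Q H x"] z Qqb by linarith
      ultimately show ?thesis by blast
    qed
    have gp: "cmod (exp (R x + \<i> * \<Theta> x) - ?Q (\<lambda>u. exp (X u + \<i> * H u)) x
               - ((R x + \<i> * \<Theta> x) - (?Q X x + \<i> * ?Q H x))) \<le> 8 * m^2
           \<and> cmod ((R x + \<i> * \<Theta> x) - (?Q X x + \<i> * ?Q H x)) \<le> 4 * m"
      using gen[of "\<i>"] by simp
    have gm: "cmod (exp (R x - \<i> * \<Theta> x) - ?Q (\<lambda>u. exp (X u - \<i> * H u)) x
               - ((R x - \<i> * \<Theta> x) - (?Q X x - \<i> * ?Q H x))) \<le> 8 * m^2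
           \<and> cmod ((R x - \<i> * \<Theta> x) - (?Q X x - \<i> * ?Q H x)) \<le> 4 * m"
      using gen[of "- \<i>"] by simp
    define L1 where "L1 = (R x - \<i> * \<Theta> x) - (?Q X x - \<i> * ?Q H x)"
    define L2 where "L2 = (R x + \<i> * \<Theta> x) - (?Q X x + \<i> * ?Q H x)"
    define S1 where "S1 = exp (R x - \<i> * \<Theta> x) - ?Q (\<lambda>u. exp (X u - \<i> * H u)) x - L1"
    define S2 where "S2 = exp (R x + \<i> * \<Theta> x) - ?Q (\<lambda>u. exp (X u + \<i> * H u)) x - L2"
    have LL: "L1 * L2 = (R x - ?Q X x) * (R x - ?Q X x) + (\<Theta> x - ?Q H x) * (\<Theta> x - ?Q H x)"
      unfolding L1_def L2_def by (simp add: algebra_simps)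
    have "cmod ((L1 + S1) * (L2 + S2) - L1 * L2) \<le> 128 * m^3"
      by (rule prod_err) (use gp gm m in \<open>auto simp: L1_def L2_def S1_def S2_def\<close>)
    then show ?thesis unfolding LL by (simp add: S1_def S2_def)
  qed
  show ?thesis
    unfolding ip0_def
    apply (simp only: sum_subtractf[symmetric] sum.distrib[symmetric])
    by (rule sum_bound) (rule pt)
qed


definition Dop :: "nat \<Rightarrow> nat \<Rightarrow> nat \<Rightarrow> nat \<Rightarrow> (pt \<Rightarrow> pt \<Rightarrow> complex) \<Rightarrow> real \<Rightarrow> field \<Rightarrow> field" where
  "Dop T N M0 M K d g = (\<lambda>u. - of_real d * kop T N M0 M K g u - lap T N M0 M g u)"

lemma Dop_bound:
  assumes pos: "T \<ge> 1" "N \<ge> 1" "M0 \<ge> 1" "M \<ge> 1" and d: "d \<ge> 0"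
    and g: "\<And>u. u \<in> Yn T N M0 M \<Longrightarrow> cmod (g u) \<le> A" and A: "A \<ge> 0" and u: "u \<in> Yn T N M0 M"
  shows "cmod (Dop T N M0 M K d g u) \<le> (d * BK T N M0 M K + 12 * real N ^ 2) * A"
proof -
  have "cmod (Dop T N M0 M K d g u) \<le> cmod (of_real d * kop T N M0 M K g u) + cmod (lap T N M0 M g u)"
    unfolding Dop_def using norm_triangle_ineq4[of "- of_real d * kop T N M0 M K g u" "lap T N M0 M g u"]
    by simp
  also have "\<dots> \<le> d * (BK T N M0 M K * A) + 12 * real N ^ 2 * A"
    using kop_bound[OF g u A, where K=K] lap_bound[OF pos g, where u=u] d
    by (intro add_mono) (auto simp: norm_mult intro: mult_left_mono)
  finally show ?thesis by (simp add: algebra_simps)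
qed

lemma ipn_one_Dop:
  assumes pos: "T \<ge> 1" "N \<ge> 1" "M0 \<ge> 1" "M \<ge> 1"
    and antisym: "\<forall>f g. ipn T N M0 M (kop T N M0 M K f) g = - ipn T N M0 M f (kop T N M0 M K g)"
    and const: "\<forall>u\<in>Yn T N M0 M. kop T N M0 M K (\<lambda>_. 1) u = 0"
  shows "ipn T N M0 M (\<lambda>_. 1) (Dop T N M0 M K d g) = 0"
proof -
  have k: "ipn T N M0 M (kop T N M0 M K (\<lambda>_. 1)) g = 0"
    unfolding ipn_def using const by simp
  have k2: "ipn T N M0 M (\<lambda>_. 1) (kop T N M0 M K g) = 0"
    using antisym k by (metis neg_equal_0_iff_equal)
  have l: "ipn T N M0 M (\<lambda>_. 1) (lap T N M0 M g) = 0"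
    using lap_sym[OF pos, of "\<lambda>_. 1" g] by (simp add: lap_const ipn_def)
  show ?thesis unfolding Dop_def by (simp add: ipn_lin k2 l)
qed

lemma Dop_exp:
  assumes const: "\<forall>u\<in>Yn T N M0 M. kop T N M0 M K (\<lambda>_. 1) u = 0" and u: "u \<in> Yn T N M0 M"
  shows "Dop T N M0 M K d (\<lambda>u. exp (p u)) u = Dop T N M0 M K d p u + Dop T N M0 M K d (\<lambda>u. exp (p u) - 1 - p u) u"
proof -
  have e: "(\<lambda>u. exp (p u)) = (\<lambda>u. (1 + p u) + (exp (p u) - 1 - p u))" by simp
  show ?thesis unfolding e Dop_def kop_add lap_add using const u by (simp add: lap_const algebra_simps)
qed

lemma err2:
  fixes X H :: field and m :: real
  assumes pos: "T \<ge> 1" "N \<ge> 1" "M0 \<ge> 1" "M \<ge> 1" and d: "d \<ge> 0"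
    and antisym: "\<forall>f g. ipn T N M0 M (kop T N M0 M K f) g = - ipn T N M0 M f (kop T N M0 M K g)"
    and const: "\<forall>u\<in>Yn T N M0 M. kop T N M0 M K (\<lambda>_. 1) u = 0"
    and m: "0 \<le> m" "m \<le> 1/8"
    and bn: "\<And>u. u \<in> Yn T N M0 M \<Longrightarrow> cmod (X u) \<le> m \<and> cmod (H u) \<le> m"
  shows "cmod (ipn T N M0 M (\<lambda>u. exp (X u - \<i> * H u)) (Dop T N M0 M K d (\<lambda>u. exp (X u + \<i> * H u)))
             - ipn T N M0 M (\<lambda>u. X u - \<i> * H u) (Dop T N M0 M K d (\<lambda>u. X u + \<i> * H u)))
         \<le> Wn T N * card (Yn T N M0 M) * (24 * (d * BK T N M0 M K + 12 * real N ^ 2) * m^3)"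
proof -
  let ?ipn = "ipn T N M0 M" and ?D = "Dop T N M0 M K d" and ?BD = "d * BK T N M0 M K + 12 * real N ^ 2"
  define p where "p = (\<lambda>u. X u + \<i> * H u)"
  define q where "q = (\<lambda>u. X u - \<i> * H u)"
  define sp where "sp = (\<lambda>u. exp (p u) - 1 - p u)"
  define sq where "sq = (\<lambda>u. exp (q u) - 1 - q u)"
  have BD: "?BD \<ge> 0" using d BK_nonneg by simp
  have pb: "cmod (p u) \<le> 2*m" "cmod (q u) \<le> 2*m" if "u \<in> Yn T N M0 M" for u
    using cmod_pm[of "X u" "H u"] bn[OF that] unfolding p_def q_def by auto
  have half: "cmod (p u) \<le> 1/2" "cmod (q u) \<le> 1/2" if "u \<in> Yn T N M0 M" for u
    using pb[OF that] m by auto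
  have spb: "cmod (sp u) \<le> 4*m^2" if "u \<in> Yn T N M0 M" for u
  proof -
    have "cmod (sp u) \<le> cmod (p u)^2" unfolding sp_def by (rule exp_rem2[OF half(1)[OF that]])
    also have "\<dots> \<le> (2*m)^2" using pb[OF that] by (intro power_mono) auto
    finally show ?thesis by (simp add: power_mult_distrib)
  qed
  have sqb: "cmod (sq u) \<le> 4*m^2" if "u \<in> Yn T N M0 M" for u
  proof -
    have "cmod (sq u) \<le> cmod (q u)^2" unfolding sq_def by (rule exp_rem2[OF half(2)[OF that]])
    also have "\<dots> \<le> (2*m)^2" using pb[OF that] by (intro power_mono) auto
    finally show ?thesis by (simp add: power_mult_distrib)
  qed
  have eqb: "cmod (exp (q u) - 1) \<le> 4*m" if "u \<in> Yn T N M0 M" for u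
    using exp_rem1[OF half(2)[OF that]] pb[OF that] by linarith
  have Dpb: "cmod (?D p u) \<le> ?BD * (2*m)" if "u \<in> Yn T N M0 M" for u
    by (rule Dop_bound[OF pos d _ _ that]) (use pb m in auto)
  have Dspb: "cmod (?D sp u) \<le> ?BD * (4*m^2)" if "u \<in> Yn T N M0 M" for u
    by (rule Dop_bound[OF pos d _ _ that]) (use spb m in auto)
  have one: "?ipn (\<lambda>_. 1) (?D g) = 0" for g by (rule ipn_one_Dop[OF pos antisym const])
  have s1: "?ipn (\<lambda>u. exp (q u)) (?D (\<lambda>u. exp (p u))) = ?ipn (\<lambda>u. exp (q u)) (\<lambda>u. ?D p u + ?D sp u)"
    by (rule ipn_cong) (simp add: Dop_exp[OF const] sp_def)
  have s2: "?ipn (\<lambda>u. exp (q u)) (?D p) = ?ipn q (?D p) + ?ipn sq (?D p)"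
  proof -
    have "(\<lambda>u. exp (q u)) = (\<lambda>u. 1 + q u + sq u)" by (simp add: sq_def)
    then show ?thesis using one[of p] by (simp add: ipn_lin)
  qed
  have s3: "?ipn (\<lambda>u. exp (q u)) (?D sp) = ?ipn (\<lambda>u. exp (q u) - 1) (?D sp)"
  proof -
    have "(\<lambda>u. exp (q u)) = (\<lambda>u. 1 + (exp (q u) - 1))" by simp
    then show ?thesis using one[of sp] by (simp only: ipn_add_l) simp
  qed
  have diff: "?ipn (\<lambda>u. exp (q u)) (?D (\<lambda>u. exp (p u))) - ?ipn q (?D p)
      = ?ipn sq (?D p) + ?ipn (\<lambda>u. exp (q u) - 1) (?D sp)"
    unfolding s1 ipn_add_r s2 s3 by simp
  have b1: "cmod (?ipn sq (?D p)) \<le> Wn T N * card (Yn T N M0 M) * (8 * ?BD * m^3)"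
  proof (rule ipn_bound)
    fix u assume u: "u \<in> Yn T N M0 M"
    have "cmod (sq u * ?D p u) \<le> (4*m^2) * (?BD * (2*m))"
      unfolding norm_mult by (intro mult_mono sqb Dpb u) (use BD m in auto)
    then show "cmod (sq u * ?D p u) \<le> 8 * ?BD * m^3" by (simp add: power2_eq_square power3_eq_cube algebra_simps)
  qed
  have b2: "cmod (?ipn (\<lambda>u. exp (q u) - 1) (?D sp)) \<le> Wn T N * card (Yn T N M0 M) * (16 * ?BD * m^3)"
  proof (rule ipn_bound)
    fix u assume u: "u \<in> Yn T N M0 M"
    have "cmod ((exp (q u) - 1) * ?D sp u) \<le> (4*m) * (?BD * (4*m^2))"
      unfolding norm_mult by (intro mult_mono eqb Dspb u) (use BD m in auto)
    then show "cmod ((exp (q u) - 1) * ?D sp u) \<le> 16 * ?BD * m^3" by (simp add: power2_eq_square power3_eq_cube algebra_simps)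
  qed
  have "cmod (?ipn (\<lambda>u. exp (q u)) (?D (\<lambda>u. exp (p u))) - ?ipn q (?D p))
      \<le> Wn T N * card (Yn T N M0 M) * (8 * ?BD * m^3) + Wn T N * card (Yn T N M0 M) * (16 * ?BD * m^3)"
    unfolding diff using norm_triangle_ineq[of "?ipn sq (?D p)" "?ipn (\<lambda>u. exp (q u) - 1) (?D sp)"] b1 b2 by linarith
  also have "\<dots> = Wn T N * card (Yn T N M0 M) * (24 * ?BD * m^3)" by (simp add: algebra_simps)
  finally show ?thesis unfolding p_def q_def by simp
qed

lemma err3:
  fixes X :: field and m \<mu> :: real
  assumes m: "0 \<le> m" "m \<le> 1/8" and mu: "\<mu> \<ge> 0"
    and bn: "\<And>u. u \<in> Yn T N M0 M \<Longrightarrow> cmod (X u) \<le> m"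
  shows "cmod (ipn T N M0 M (\<lambda>u. - of_real \<mu> * exp (2 * X u) + of_real \<mu> / 2 * exp (4 * X u)) (\<lambda>_. 1)
          - (2 * of_real \<mu> * ipn T N M0 M X X - of_real \<mu> / 2 * ipn T N M0 M (\<lambda>_. 1) (\<lambda>_. 1)))
      \<le> Wn T N * card (Yn T N M0 M) * (40 * \<mu> * m^3)"
proof -
  define \<rho> where "\<rho> z = exp z - 1 - z - z^2/2" for z :: complex
  have e: "2 * of_real \<mu> * ipn T N M0 M X X - of_real \<mu> / 2 * ipn T N M0 M (\<lambda>_. 1) (\<lambda>_. 1)
     = ipn T N M0 M (\<lambda>u. 2 * of_real \<mu> * (X u * X u) - of_real \<mu> / 2) (\<lambda>_. 1)"
    unfolding ipn_def by (simp add: sum_subtractf sum_distrib_left algebra_simps)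
  have d: "ipn T N M0 M (\<lambda>u. - of_real \<mu> * exp (2 * X u) + of_real \<mu> / 2 * exp (4 * X u)) (\<lambda>_. 1)
      - ipn T N M0 M (\<lambda>u. 2 * of_real \<mu> * (X u * X u) - of_real \<mu> / 2) (\<lambda>_. 1)
     = ipn T N M0 M (\<lambda>u. - of_real \<mu> * \<rho> (2 * X u) + of_real \<mu> / 2 * \<rho> (4 * X u)) (\<lambda>_. 1)"
  proof -
    have pw: "(- of_real \<mu> * exp (2 * X u) + of_real \<mu> / 2 * exp (4 * X u))
       - (2 * of_real \<mu> * (X u * X u) - of_real \<mu> / 2)
       = - of_real \<mu> * \<rho> (2 * X u) + of_real \<mu> / 2 * \<rho> (4 * X u)" for u
      unfolding \<rho>_def by (simp add: algebra_simps power2_eq_square)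
    show ?thesis by (simp only: ipn_diff_l[symmetric] pw)
  qed
  have rb: "cmod (\<rho> (c * X u)) \<le> c^3 * m^3" if "u \<in> Yn T N M0 M" "c \<le> 4" "c \<ge> 0" for u and c :: real
  proof -
    have n: "cmod (of_real c * X u) \<le> c * m" using bn[OF that(1)] that by (simp add: norm_mult mult_left_mono)
    have "c * m \<le> 4 * (1/8)" by (intro mult_mono) (use m that in auto)
    then have "c * m \<le> 1/2" by simp
    have "cmod (\<rho> (of_real c * X u)) \<le> cmod (of_real c * X u) ^ 3"
      unfolding \<rho>_def by (rule exp_rem3) (use n \<open>c * m \<le> 1/2\<close> in linarith)
    also have "\<dots> \<le> (c*m)^3" using n by (intro power_mono) auto
    finally show ?thesis by (simp add: power_mult_distrib)
  qed
  have "cmod (ipn T N M0 M (\<lambda>u. - of_real \<mu> * \<rho> (2 * X u) + of_real \<mu> / 2 * \<rho> (4 * X u)) (\<lambda>_. 1))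
        \<le> Wn T N * card (Yn T N M0 M) * (40 * \<mu> * m^3)"
  proof (rule ipn_bound)
    fix u assume u: "u \<in> Yn T N M0 M"
    have r2: "cmod (\<rho> (2 * X u)) \<le> 8 * m^3" using rb[OF u, of 2] by simp
    have r4: "cmod (\<rho> (4 * X u)) \<le> 64 * m^3" using rb[OF u, of 4] by simp
    have "cmod (- of_real \<mu> * \<rho> (2 * X u) + of_real \<mu> / 2 * \<rho> (4 * X u))
        \<le> \<mu> * cmod (\<rho> (2 * X u)) + \<mu> / 2 * cmod (\<rho> (4 * X u))"
      using norm_triangle_ineq[of "- of_real \<mu> * \<rho> (2 * X u)" "of_real \<mu> / 2 * \<rho> (4 * X u)"] mu
      by (simp add: norm_mult norm_divide)
    also have "\<dots> \<le> \<mu> * (8 * m^3) + \<mu> / 2 * (64 * m^3)"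
      using r2 r4 mu by (intro add_mono mult_left_mono) auto
    finally show "cmod ((- of_real \<mu> * \<rho> (2 * X u) + of_real \<mu> / 2 * \<rho> (4 * X u)) * 1) \<le> 40 * \<mu> * m^3"
      by simp
  qed
  then show ?thesis unfolding e d[symmetric] .
qed


lemma core:
  fixes T N M0 M :: nat and K :: "pt \<Rightarrow> pt \<Rightarrow> complex" and d \<mu> v :: real and R \<Theta> X H :: field
  assumes pos: "T \<ge> 1" "N \<ge> 1" "M0 \<ge> 1" "M \<ge> 1"
    and dmv: "d > 0" "\<mu> > 0" "v > 0"
    and antisym: "\<forall>f g. ipn T N M0 M (kop T N M0 M K f) g = - ipn T N M0 M f (kop T N M0 M K g)"
    and const: "\<forall>u\<in>Yn T N M0 M. kop T N M0 M K (\<lambda>_. 1) u = 0"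
    and E1: "\<And>u. u \<in> Yn T N M0 M \<Longrightarrow> 2 * of_real \<mu> * X u - lap T N M0 M X u
          + \<i> * of_real d * kop_adj T N M0 M K H u
          + Qn_adj T N M0 M (Qn T N M0 M X) u = Qn_adj T N M0 M R u"
    and E2: "\<And>u. u \<in> Yn T N M0 M \<Longrightarrow> \<i> * of_real d * kop T N M0 M K X u - lap T N M0 M H u
          + Qn_adj T N M0 M (Qn T N M0 M H) u = Qn_adj T N M0 M \<Theta> u"
    and mdef: "m = max (max (nrm0 M0 M R) (nrm0 M0 M \<Theta>)) (max (nrmn T N M0 M X) (nrmn T N M0 M H))"
    and msmall: "m \<le> 1/8"
  shows "cmod (An T N M0 M K d \<mu> v (\<lambda>x. of_real (sqrt (\<mu> / v)) * exp (R x - \<i> * \<Theta> x))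
                 (\<lambda>x. of_real (sqrt (\<mu> / v)) * exp (R x + \<i> * \<Theta> x))
                 (\<lambda>u. of_real (sqrt (\<mu> / v)) * exp (X u - \<i> * H u))
                 (\<lambda>u. of_real (sqrt (\<mu> / v)) * exp (X u + \<i> * H u)) / of_real ((sqrt (\<mu> / v))^2)
              - (ip0p M0 M (R, \<Theta>) (\<lambda>x. R x - Qn T N M0 M X x, \<lambda>x. \<Theta> x - Qn T N M0 M H x)
                 - of_real ((sqrt (\<mu> / v))^2 * v / 2) * ipn T N M0 M (\<lambda>_. 1) (\<lambda>_. 1)))
        \<le> (card (Y0 M0 M) * 128 + Wn T N * card (Yn T N M0 M) * (24 * (d * BK T N M0 M K + 12 * real N ^ 2) + 40 * \<mu>)) * m ^ 3"
proof -
  let ?r = "sqrt (\<mu> / v)"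
  have r2: "?r^2 = \<mu> / v" using dmv by simp
  have vr: "v * ?r^2 = \<mu>" using dmv r2 by simp
  have r2ne: "(of_real (?r^2) :: complex) \<noteq> 0" using dmv r2 by simp
  have rv: "?r^2 * v / 2 = \<mu> / 2" using vr by (simp add: mult.commute)
  have fin0: "finite ((\<lambda>x. cmod (f x)) ` Y0 M0 M)" for f :: field using finite_Y0 by simp
  have finn: "finite ((\<lambda>x. cmod (f x)) ` Yn T N M0 M)" for f :: field using finite_Yn by simp
  have n0: "x \<in> Y0 M0 M \<Longrightarrow> cmod (f x) \<le> nrm0 M0 M f" for f x
    unfolding nrm0_def using fin0 by (intro Max_ge) auto
  have nn: "u \<in> Yn T N M0 M \<Longrightarrow> cmod (f u) \<le> nrmn T N M0 M f" for f u
    unfolding nrmn_def using finn by (intro Max_ge) auto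
  have b0: "cmod (R x) \<le> m \<and> cmod (\<Theta> x) \<le> m" if "x \<in> Y0 M0 M" for x
    using n0[OF that, of R] n0[OF that, of \<Theta>] unfolding mdef by linarith
  have bn: "cmod (X u) \<le> m \<and> cmod (H u) \<le> m" if "u \<in> Yn T N M0 M" for u
    using nn[OF that, of X] nn[OF that, of H] unfolding mdef by linarith
  have m0: "0 \<le> m" using b0[OF Y0_ne[OF pos(3,4)]] by (meson norm_ge_zero order_trans)
  define T1 where "T1 = ip0 M0 M (\<lambda>x. exp (R x - \<i> * \<Theta> x) - Qn T N M0 M (\<lambda>u. exp (X u - \<i> * H u)) x)
                               (\<lambda>x. exp (R x + \<i> * \<Theta> x) - Qn T N M0 M (\<lambda>u. exp (X u + \<i> * H u)) x)"
  define T2 where "T2 = ipn T N M0 M (\<lambda>u. exp (X u - \<i> * H u)) (Dop T N M0 M K d (\<lambda>u. exp (X u + \<i> * H u)))"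
  define T3 where "T3 = ipn T N M0 M (\<lambda>u. - of_real \<mu> * exp (2 * X u) + of_real \<mu> / 2 * exp (4 * X u)) (\<lambda>_. 1)"
  define I1 where "I1 = ip0 M0 M (\<lambda>x. R x - Qn T N M0 M X x) (\<lambda>x. R x - Qn T N M0 M X x)
       + ip0 M0 M (\<lambda>x. \<Theta> x - Qn T N M0 M H x) (\<lambda>x. \<Theta> x - Qn T N M0 M H x)"
  define I2 where "I2 = ipn T N M0 M (\<lambda>u. X u - \<i> * H u) (Dop T N M0 M K d (\<lambda>u. X u + \<i> * H u))"
  define I3 where "I3 = 2 * of_real \<mu> * ipn T N M0 M X X - of_real \<mu> / 2 * ipn T N M0 M (\<lambda>_. 1) (\<lambda>_. 1)"
  have An: "An T N M0 M K d \<mu> v (\<lambda>x. of_real ?r * exp (R x - \<i> * \<Theta> x))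
                 (\<lambda>x. of_real ?r * exp (R x + \<i> * \<Theta> x))
                 (\<lambda>u. of_real ?r * exp (X u - \<i> * H u))
                 (\<lambda>u. of_real ?r * exp (X u + \<i> * H u)) / of_real (?r^2) = T1 + T2 + T3"
    unfolding An_expand[OF vr] T1_def T2_def T3_def Dop_def using r2ne by simp
  have MI: "I1 + I2 + 2 * of_real \<mu> * ipn T N M0 M X X
     = ip0 M0 M R (\<lambda>x. R x - Qn T N M0 M X x) + ip0 M0 M \<Theta> (\<lambda>x. \<Theta> x - Qn T N M0 M H x)"
    unfolding I1_def I2_def Dop_def by (rule main_identity[OF pos antisym E1 E2])
  have ip: "ip0p M0 M (R, \<Theta>) (\<lambda>x. R x - Qn T N M0 M X x, \<lambda>x. \<Theta> x - Qn T N M0 M H x)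
      = ip0 M0 M R (\<lambda>x. R x - Qn T N M0 M X x) + ip0 M0 M \<Theta> (\<lambda>x. \<Theta> x - Qn T N M0 M H x)"
    unfolding ip0p_def by simp
  have dec: "An T N M0 M K d \<mu> v (\<lambda>x. of_real ?r * exp (R x - \<i> * \<Theta> x))
                 (\<lambda>x. of_real ?r * exp (R x + \<i> * \<Theta> x))
                 (\<lambda>u. of_real ?r * exp (X u - \<i> * H u))
                 (\<lambda>u. of_real ?r * exp (X u + \<i> * H u)) / of_real (?r^2)
              - (ip0p M0 M (R, \<Theta>) (\<lambda>x. R x - Qn T N M0 M X x, \<lambda>x. \<Theta> x - Qn T N M0 M H x)
                 - of_real (?r^2 * v / 2) * ipn T N M0 M (\<lambda>_. 1) (\<lambda>_. 1))
      = (T1 - I1) + (T2 - I2) + (T3 - I3)"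
    unfolding An ip rv MI[symmetric] I3_def by (simp add: algebra_simps)
  have e1: "cmod (T1 - I1) \<le> card (Y0 M0 M) * (128 * m^3)"
    unfolding T1_def I1_def by (rule err1[OF pos m0 msmall b0 bn])
  have e2: "cmod (T2 - I2) \<le> Wn T N * card (Yn T N M0 M) * (24 * (d * BK T N M0 M K + 12 * real N ^ 2) * m^3)"
    unfolding T2_def I2_def by (rule err2[OF pos _ antisym const m0 msmall bn]) (use dmv in simp)
  have e3: "cmod (T3 - I3) \<le> Wn T N * card (Yn T N M0 M) * (40 * \<mu> * m^3)"
    unfolding T3_def I3_def by (rule err3[OF m0 msmall]) (use dmv bn in auto)
  have "cmod ((T1 - I1) + (T2 - I2) + (T3 - I3)) \<le> cmod (T1 - I1) + cmod (T2 - I2) + cmod (T3 - I3)"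
    using norm_triangle_ineq[of "(T1 - I1) + (T2 - I2)" "T3 - I3"] norm_triangle_ineq[of "T1 - I1" "T2 - I2"]
    by linarith
  also have "\<dots> \<le> card (Y0 M0 M) * (128 * m^3)
      + Wn T N * card (Yn T N M0 M) * (24 * (d * BK T N M0 M K + 12 * real N ^ 2) * m^3)
      + Wn T N * card (Yn T N M0 M) * (40 * \<mu> * m^3)"
    using e1 e2 e3 by linarith
  also have "\<dots> = (card (Y0 M0 M) * 128 + Wn T N * card (Yn T N M0 M) * (24 * (d * BK T N M0 M K + 12 * real N ^ 2) + 40 * \<mu>)) * m ^ 3"
    by (simp add: algebra_simps)
  finally show ?thesis unfolding dec .
qed

theorem lemmaA1:
  fixes T N M0 M :: nat and K :: "pt \<Rightarrow> pt \<Rightarrow> complex" and d \<mu> v :: real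
  assumes "T \<ge> 1" and "N \<ge> 1" and "M0 \<ge> 1" and "M \<ge> 1"
    and "d > 0" and "\<mu> > 0" and "v > 0"
    and antisym: "\<forall>f g. ipn T N M0 M (kop T N M0 M K f) g = - ipn T N M0 M f (kop T N M0 M K g)"
    and const: "\<forall>u\<in>Yn T N M0 M. kop T N M0 M K (\<lambda>_. 1) u = 0"
    and inv: "sq_invertible T N M0 M K d \<mu>"
  shows "\<exists>C \<delta>. \<delta> > 0 \<and> (\<forall>R \<Theta> :: field.
     let r = sqrt (\<mu> / v);
         XH = sq_inv T N M0 M K d \<mu> (Qn_adjp T N M0 M (R, \<Theta>));
         X = fst XH; H = snd XH;
         \<psi> = (\<lambda>x. of_real r * exp (R x + \<i> * \<Theta> x));
         \<psi>s = (\<lambda>x. of_real r * exp (R x - \<i> * \<Theta> x));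
         \<phi> = (\<lambda>u. of_real r * exp (X u + \<i> * H u));
         \<phi>s = (\<lambda>u. of_real r * exp (X u - \<i> * H u));
         m = max (max (nrm0 M0 M R) (nrm0 M0 M \<Theta>)) (max (nrmn T N M0 M X) (nrmn T N M0 M H))
     in m \<le> \<delta> \<longrightarrow>
        cmod (An T N M0 M K d \<mu> v \<psi>s \<psi> \<phi>s \<phi> / of_real (r^2)
              - (ip0p M0 M (R, \<Theta>)
                   (\<lambda>x. R x - fst (Qnp T N M0 M XH) x, \<lambda>x. \<Theta> x - snd (Qnp T N M0 M XH) x)
                 - of_real (r^2 * v / 2) * ipn T N M0 M (\<lambda>_. 1) (\<lambda>_. 1)))
        \<le> C * m ^ 3)"
proof -
  define C where "C = real (card (Y0 M0 M) * 128) + Wn T N * card (Yn T N M0 M) * (24 * (d * BK T N M0 M K + 12 * real N ^ 2) + 40 * \<mu>)"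
  show ?thesis
  proof (intro exI conjI allI)
    show "(1/8::real) > 0" by simp
  next
    fix R \<Theta> :: field
    define XH where "XH = sq_inv T N M0 M K d \<mu> (Qn_adjp T N M0 M (R, \<Theta>))"
    have th: "suppn T N M0 M XH \<and> eq_on_n T N M0 M (sq T N M0 M K d \<mu> XH) (Qn_adjp T N M0 M (R, \<Theta>))"
      unfolding XH_def sq_inv_def
      by (rule theI'[OF spec[OF inv[unfolded sq_invertible_def]]])
    have E1: "\<And>u. u \<in> Yn T N M0 M \<Longrightarrow> 2 * of_real \<mu> * fst XH u - lap T N M0 M (fst XH) u
          + \<i> * of_real d * kop_adj T N M0 M K (snd XH) u
          + Qn_adj T N M0 M (Qn T N M0 M (fst XH)) u = Qn_adj T N M0 M R u"
      using th unfolding eq_on_n_def sq_def Qn_adjp_def by simp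
    have E2: "\<And>u. u \<in> Yn T N M0 M \<Longrightarrow> \<i> * of_real d * kop T N M0 M K (fst XH) u - lap T N M0 M (snd XH) u
          + Qn_adj T N M0 M (Qn T N M0 M (snd XH)) u = Qn_adj T N M0 M \<Theta> u"
      using th unfolding eq_on_n_def sq_def Qn_adjp_def by simp
    show "let r = sqrt (\<mu> / v);
         XH = sq_inv T N M0 M K d \<mu> (Qn_adjp T N M0 M (R, \<Theta>));
         X = fst XH; H = snd XH;
         \<psi> = (\<lambda>x. of_real r * exp (R x + \<i> * \<Theta> x));
         \<psi>s = (\<lambda>x. of_real r * exp (R x - \<i> * \<Theta> x));
         \<phi> = (\<lambda>u. of_real r * exp (X u + \<i> * H u));
         \<phi>s = (\<lambda>u. of_real r * exp (X u - \<i> * H u));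
         m = max (max (nrm0 M0 M R) (nrm0 M0 M \<Theta>)) (max (nrmn T N M0 M X) (nrmn T N M0 M H))
     in m \<le> 1/8 \<longrightarrow>
        cmod (An T N M0 M K d \<mu> v \<psi>s \<psi> \<phi>s \<phi> / of_real (r^2)
              - (ip0p M0 M (R, \<Theta>)
                   (\<lambda>x. R x - fst (Qnp T N M0 M XH) x, \<lambda>x. \<Theta> x - snd (Qnp T N M0 M XH) x)
                 - of_real (r^2 * v / 2) * ipn T N M0 M (\<lambda>_. 1) (\<lambda>_. 1)))
        \<le> C * m ^ 3"
      unfolding Let_def XH_def[symmetric] Qnp_def C_def fst_conv snd_conv
      using core[OF assms(1-7) antisym const E1 E2 refl] by blast
  qed
qed
end
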